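(* For every finite hypergraph $\mathcal{H}=(X,\mathcal{E})$ with no isolated vertices and no empty hyperedge, $\tau_{\rm gr}(\mathcal{H})=\rho_{\rm gr}(\mathcal{H})$.
   Context: A vertex of a hypergraph is isolated if it lies in no hyperedge. A sequence $(C_1,\ldots,C_r)$ of distinct hyperedges is a legal hyperedge sequence if $C_i\setminus\bigcup_{j<i}C_j\neq\emptyset$ for all $i\in\{2,\ldots,r\}$; it is an edge covering sequence if moreover $C_1\cup\cdots\cup C_r=X$. The Grundy covering number $\rho_{\rm gr}(\mathcal{H})$ is the maximum length of an edge covering sequence. A legal transversal sequence is a sequence $(v_1,\ldots,v_t)$ of distinct vertices of $X$ such that for each $i$ there is a hyperedge $E_i\in\mathcal{E}$ with $v_i\in E_i$ and $v_j\notin E_i$ for all $j<i$, and such that every hyperedge of $\mathcal{E}$ contains some $v_i$. The Grundy transversal number $\tau_{\rm gr}(\mathcal{H})$ is the maximum length of a legal transversal sequence. *)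

theory Defs
  imports Main
begin

definition hypergraph :: "'a set \<Rightarrow> 'a set set \<Rightarrow> bool" where
  "hypergraph X E \<longleftrightarrow> (\<forall>e\<in>E. e \<subseteq> X)"

definition isolated_vertex :: "'a set \<Rightarrow> 'a set set \<Rightarrow> 'a \<Rightarrow> bool" where
  "isolated_vertex X E v \<longleftrightarrow> v \<in> X \<and> (\<forall>e\<in>E. v \<notin> e)"

definition legal_edge_seq :: "'a set set \<Rightarrow> 'a set list \<Rightarrow> bool" where
  "legal_edge_seq E Cs \<longleftrightarrow> distinct Cs \<and> set Cs \<subseteq> E \<and>
     (\<forall>i. 1 \<le> i \<and> i < length Cs \<longrightarrow> Cs ! i - \<Union>(set (take i Cs)) \<noteq> {})"

definition edge_covering_seq :: "'a set \<Rightarrow> 'a set set \<Rightarrow> 'a set list \<Rightarrow> bool" where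
  "edge_covering_seq X E Cs \<longleftrightarrow> legal_edge_seq E Cs \<and> \<Union>(set Cs) = X"

definition grundy_covering_number :: "'a set \<Rightarrow> 'a set set \<Rightarrow> nat" where
  "grundy_covering_number X E = Max {length Cs | Cs. edge_covering_seq X E Cs}"

definition legal_transversal_seq :: "'a set \<Rightarrow> 'a set set \<Rightarrow> 'a list \<Rightarrow> bool" where
  "legal_transversal_seq X E vs \<longleftrightarrow> distinct vs \<and> set vs \<subseteq> X \<and>
     (\<forall>i < length vs. \<exists>e\<in>E. vs ! i \<in> e \<and> (\<forall>j < i. vs ! j \<notin> e)) \<and>
     (\<forall>e\<in>E. \<exists>v\<in>set vs. v \<in> e)"

definition grundy_transversal_number :: "'a set \<Rightarrow> 'a set set \<Rightarrow> nat" where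
  "grundy_transversal_number X E = Max {length vs | vs. legal_transversal_seq X E vs}"

end

theory Submission
  imports Defs
begin

definition ptrans :: "'a set \<Rightarrow> 'a set set \<Rightarrow> 'a list \<Rightarrow> bool" where
  "ptrans X E vs \<longleftrightarrow> distinct vs \<and> set vs \<subseteq> X \<and>
     (\<forall>i < length vs. \<exists>e\<in>E. vs ! i \<in> e \<and> (\<forall>j < i. vs ! j \<notin> e))"

lemma ext_trans:
  assumes H: "hypergraph X E" and fX: "finite X" and ne: "{} \<notin> E"
  shows "ptrans X E vs \<Longrightarrow> \<exists>ws. legal_transversal_seq X E ws \<and> length vs \<le> length ws"
proof (induction "card (X - set vs)" arbitrary: vs rule: less_induct)
  case less
  show ?case
  proof (cases "\<forall>e\<in>E. \<exists>v\<in>set vs. v\<in>e")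
    case True thus ?thesis using less.prems unfolding ptrans_def legal_transversal_seq_def by auto
  next
    case False
    then obtain e where e: "e\<in>E" "\<forall>v\<in>set vs. v\<notin>e" by auto
    then obtain v where v: "v\<in>e" using ne by (metis all_not_in_conv)
    have vX: "v\<in>X" using H e v unfolding hypergraph_def by auto
    have vn: "v \<notin> set vs" using e v by auto
    have P: "ptrans X E (vs@[v])"
      unfolding ptrans_def
    proof (intro conjI allI impI)
      show "distinct (vs @ [v])" using less.prems vn by (simp add: ptrans_def)
      show "set (vs @ [v]) \<subseteq> X" using less.prems vX by (simp add: ptrans_def)
      fix i assume i: "i < length (vs@[v])"
      show "\<exists>e\<in>E. (vs@[v])!i \<in> e \<and> (\<forall>j<i. (vs@[v])!j \<notin> e)"
      proof (cases "i < length vs")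
        case True
        then obtain e' where "e'\<in>E" "vs!i \<in> e'" "\<forall>j<i. vs!j\<notin>e'"
          using less.prems unfolding ptrans_def by blast
        thus ?thesis using True by (auto simp: nth_append)
      next
        case False
        with i have ii: "i = length vs" by simp
        have "\<forall>j<i. (vs@[v])!j \<notin> e" using e ii by (auto simp: nth_append)
        thus ?thesis using e(1) v ii by (auto simp: nth_append)
      qed
    qed
    have "X - set (vs@[v]) \<subset> X - set vs" using vX vn by auto
    hence "card (X - set (vs@[v])) < card (X - set vs)" using fX by (meson finite_Diff psubset_card_mono)
    from less.hyps[OF this P] show ?thesis by fastforce
  qed
qed

lemma ext_cover:
  assumes H: "hypergraph X E" and fX: "finite X" and ni: "\<forall>v\<in>X. \<not> isolated_vertex X E v"
  shows "legal_edge_seq E Cs \<Longrightarrow> \<exists>Ds. edge_covering_seq X E Ds \<and> length Cs \<le> length Ds"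
proof (induction "card (X - \<Union>(set Cs))" arbitrary: Cs rule: less_induct)
  case less
  have sub: "\<Union>(set Cs) \<subseteq> X" using less.prems H unfolding legal_edge_seq_def hypergraph_def by auto
  show ?case
  proof (cases "\<Union>(set Cs) = X")
    case True thus ?thesis using less.prems unfolding edge_covering_seq_def by auto
  next
    case False
    then obtain x where x: "x \<in> X" "x \<notin> \<Union>(set Cs)" using sub by auto
    then obtain e where e: "e\<in>E" "x\<in>e" using ni unfolding isolated_vertex_def by auto
    have en: "e \<notin> set Cs" using x e by auto
    have P: "legal_edge_seq E (Cs@[e])"
      unfolding legal_edge_seq_def
    proof (intro conjI allI impI)
      show "distinct (Cs @ [e])" using less.prems en by (simp add: legal_edge_seq_def)
      show "set (Cs @ [e]) \<subseteq> E" using less.prems e by (simp add: legal_edge_seq_def)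
      fix i assume i: "1 \<le> i \<and> i < length (Cs@[e])"
      show "(Cs @ [e]) ! i - \<Union> (set (take i (Cs @ [e]))) \<noteq> {}"
      proof (cases "i < length Cs")
        case True
        thus ?thesis using less.prems i unfolding legal_edge_seq_def by (auto simp: nth_append)
      next
        case False
        with i have ii: "i = length Cs" by simp
        thus ?thesis using x e by auto
      qed
    qed
    have "X - \<Union>(set (Cs@[e])) \<subset> X - \<Union>(set Cs)" using x e by auto
    hence "card (X - \<Union>(set (Cs@[e]))) < card (X - \<Union>(set Cs))" using fX by (meson finite_Diff psubset_card_mono)
    from less.hyps[OF this P] show ?thesis by fastforce
  qed
qed

lemma trans_to_edge:
  assumes "legal_transversal_seq X E vs"
  shows "\<exists>Cs. legal_edge_seq E Cs \<and> length Cs = length vs"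
proof -
  define t where "t = length vs"
  have "\<forall>i. \<exists>e. i < t \<longrightarrow> (e \<in> E \<and> vs!i \<in> e \<and> (\<forall>j<i. vs!j \<notin> e))"
    using assms unfolding legal_transversal_seq_def t_def by blast
  then obtain w where w: "\<And>i. i < t \<Longrightarrow> w i \<in> E \<and> vs!i \<in> w i \<and> (\<forall>j<i. vs!j \<notin> w i)"
    by metis
  define Cs where "Cs = rev (map w [0..<t])"
  have len: "length Cs = t" by (simp add: Cs_def)
  have nth: "\<And>i. i < t \<Longrightarrow> Cs ! i = w (t - Suc i)" by (simp add: Cs_def rev_nth)
  have inj: "inj_on w {0..<t}"
  proof (rule inj_onI)
    fix a b assume a: "a \<in> {0..<t}" and b: "b \<in> {0..<t}" and eq: "w a = w b"
    show "a = b"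
    proof (rule ccontr)
      assume "a \<noteq> b"
      then consider "a < b" | "b < a" by linarith
      thus False
      proof cases
        case 1 thus False using w[of a] w[of b] a b eq by auto
      next
        case 2 thus False using w[of a] w[of b] a b eq by auto
      qed
    qed
  qed
  have "legal_edge_seq E Cs"
    unfolding legal_edge_seq_def
  proof (intro conjI allI impI)
    show "distinct Cs" using inj by (simp add: Cs_def distinct_map)
    show "set Cs \<subseteq> E" using w by (auto simp: Cs_def)
    fix i assume i: "1 \<le> i \<and> i < length Cs"
    define m where "m = t - Suc i"
    have m: "m < t" "vs!m \<in> Cs!i" using i len nth w[of m] by (auto simp: m_def)
    have "vs!m \<notin> \<Union>(set (take i Cs))"
    proof
      assume "vs!m \<in> \<Union>(set (take i Cs))"
      then obtain D where D: "D \<in> set (take i Cs)" "vs!m \<in> D" by auto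
      then obtain k where k: "k < i" "D = take i Cs ! k" using i
        by (auto simp: in_set_conv_nth)
      have "D = w (t - Suc k)" using k i len nth by simp
      moreover have "m < t - Suc k" using k i len by (simp add: m_def)
      ultimately show False using w[of "t - Suc k"] D(2) k i len by auto
    qed
    thus "Cs ! i - \<Union> (set (take i Cs)) \<noteq> {}" using m by auto
  qed
  thus ?thesis using len t_def by blast
qed

lemma edge_to_trans:
  assumes H: "hypergraph X E" and ne: "{} \<notin> E" and c: "edge_covering_seq X E Cs"
  shows "\<exists>vs. ptrans X E vs \<and> length vs = length Cs"
proof -
  define r where "r = length Cs"
  have L: "legal_edge_seq E Cs" using c by (simp add: edge_covering_seq_def)
  have CE: "\<And>i. i < r \<Longrightarrow> Cs!i \<in> E" using L by (auto simp: legal_edge_seq_def r_def)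
  have "\<forall>i. \<exists>x. i < r \<longrightarrow> (x \<in> Cs!i \<and> (0 < i \<longrightarrow> x \<notin> \<Union>(set (take i Cs))))"
  proof
    fix i
    show "\<exists>x. i < r \<longrightarrow> (x \<in> Cs!i \<and> (0 < i \<longrightarrow> x \<notin> \<Union>(set (take i Cs))))"
    proof (cases "i < r")
      case True
      show ?thesis
      proof (cases "i = 0")
        case True
        have "Cs!i \<noteq> {}" using CE \<open>i < r\<close> ne by metis
        thus ?thesis using True by auto
      next
        case False
        hence "Cs!i - \<Union>(set (take i Cs)) \<noteq> {}" using L \<open>i<r\<close> by (auto simp: legal_edge_seq_def r_def)
        thus ?thesis by auto
      qed
    qed auto
  qed
  then obtain u where u: "\<And>i. i < r \<Longrightarrow> u i \<in> Cs!i \<and> (0 < i \<longrightarrow> u i \<notin> \<Union>(set (take i Cs)))"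
    by metis
  have key: "\<And>m k. m < k \<Longrightarrow> k < r \<Longrightarrow> u k \<notin> Cs!m"
  proof -
    fix m k assume mk: "m < k" "k < r"
    have "Cs!m \<in> set (take k Cs)"
      using mk by (metis in_set_conv_nth length_take min.absorb4 nth_take r_def)
    thus "u k \<notin> Cs!m" using u[of k] mk by auto
  qed
  define vs where "vs = rev (map u [0..<r])"
  have len: "length vs = r" by (simp add: vs_def)
  have nth: "\<And>i. i < r \<Longrightarrow> vs ! i = u (r - Suc i)" by (simp add: vs_def rev_nth)
  have inj: "inj_on u {0..<r}"
  proof (rule inj_onI)
    fix a b assume a: "a \<in> {0..<r}" and b: "b \<in> {0..<r}" and eq: "u a = u b"
    show "a = b"
    proof (rule ccontr)
      assume "a \<noteq> b"
      then consider "a < b" | "b < a" by linarith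
      thus False
      proof cases
        case 1 thus False using key[of a b] u[of a] a b eq by auto
      next
        case 2 thus False using key[of b a] u[of b] a b eq by auto
      qed
    qed
  qed
  have "ptrans X E vs"
    unfolding ptrans_def
  proof (intro conjI allI impI)
    show "distinct vs" using inj by (simp add: vs_def distinct_map)
    show "set vs \<subseteq> X" using u CE H unfolding hypergraph_def vs_def by fastforce
    fix i assume i: "i < length vs"
    show "\<exists>e\<in>E. vs ! i \<in> e \<and> (\<forall>j<i. vs ! j \<notin> e)"
    proof (intro bexI conjI allI impI)
      show "Cs ! (r - Suc i) \<in> E" using CE i len by simp
      show "vs ! i \<in> Cs ! (r - Suc i)" using u[of "r - Suc i"] nth i len by simp
      fix j assume "j < i"
      thus "vs ! j \<notin> Cs ! (r - Suc i)" using key[of "r - Suc i" "r - Suc j"] nth i len by simp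
    qed
  qed
  thus ?thesis using len r_def by blast
qed

theorem mainTheorem18:
  fixes X :: "'a set" and E :: "'a set set"
  assumes "hypergraph X E"
    and "finite X"
    and "\<forall>v\<in>X. \<not> isolated_vertex X E v"
    and "{} \<notin> E"
  shows "grundy_transversal_number X E = grundy_covering_number X E"
proof -
  define T where "T = {length vs | vs. legal_transversal_seq X E vs}"
  define C where "C = {length Cs | Cs. edge_covering_seq X E Cs}"
  have fT: "finite T"
  proof (rule finite_subset)
    show "T \<subseteq> {..card X}"
    proof
      fix n assume "n \<in> T"
      then obtain vs where "legal_transversal_seq X E vs" "n = length vs" by (auto simp: T_def)
      hence "distinct vs" "set vs \<subseteq> X" "n = length vs" by (auto simp: legal_transversal_seq_def)
      thus "n \<in> {..card X}" using assms(2) by (metis atMost_iff card_mono distinct_card)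
    qed
  qed simp
  have EP: "E \<subseteq> Pow X" using assms(1) by (auto simp: hypergraph_def)
  have fC: "finite C"
  proof (rule finite_subset)
    show "C \<subseteq> {..card (Pow X)}"
    proof
      fix n assume "n \<in> C"
      then obtain Cs where "edge_covering_seq X E Cs" "n = length Cs" by (auto simp: C_def)
      hence "distinct Cs" "set Cs \<subseteq> Pow X" "n = length Cs" using EP
        by (auto simp: edge_covering_seq_def legal_edge_seq_def)
      thus "n \<in> {..card (Pow X)}" using assms(2) by (metis atMost_iff card_mono distinct_card finite_Pow_iff)
    qed
  qed simp
  have TC: "\<forall>a\<in>T. \<exists>b\<in>C. a \<le> b"
  proof
    fix a assume "a \<in> T"
    then obtain vs where vs: "legal_transversal_seq X E vs" "a = length vs" by (auto simp: T_def)
    obtain Cs where "legal_edge_seq E Cs" "length Cs = length vs" using trans_to_edge[OF vs(1)] by blast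
    then obtain Ds where "edge_covering_seq X E Ds" "length Cs \<le> length Ds"
      using ext_cover[OF assms(1-3)] by blast
    thus "\<exists>b\<in>C. a \<le> b" using vs \<open>length Cs = length vs\<close> unfolding C_def by auto
  qed
  have CT: "\<forall>a\<in>C. \<exists>b\<in>T. a \<le> b"
  proof
    fix a assume "a \<in> C"
    then obtain Cs where Cs: "edge_covering_seq X E Cs" "a = length Cs" by (auto simp: C_def)
    obtain vs where "ptrans X E vs" "length vs = length Cs" using edge_to_trans[OF assms(1,4) Cs(1)] by blast
    then obtain ws where "legal_transversal_seq X E ws" "length vs \<le> length ws"
      using ext_trans[OF assms(1,2,4)] by blast
    thus "\<exists>b\<in>T. a \<le> b" using Cs \<open>length vs = length Cs\<close> unfolding T_def by auto
  qed
  have "ptrans X E []" by (simp add: ptrans_def)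
  then obtain ws where "legal_transversal_seq X E ws" using ext_trans[OF assms(1,2,4)] by blast
  hence neT: "T \<noteq> {}" by (auto simp: T_def)
  have "legal_edge_seq E []" by (simp add: legal_edge_seq_def)
  then obtain Ds where "edge_covering_seq X E Ds" using ext_cover[OF assms(1-3)] by blast
  hence neC: "C \<noteq> {}" by (auto simp: C_def)
  have "Max T \<le> Max C" using TC Max_in[OF fT neT] Max_ge[OF fC] by (meson order_trans)
  moreover have "Max C \<le> Max T" using CT Max_in[OF fC neC] Max_ge[OF fT] by (meson order_trans)
  ultimately show ?thesis unfolding grundy_transversal_number_def grundy_covering_number_def T_def C_def
    by simp
qed

end
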